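(* Consider the online block packing problem with $m$ resources of capacities $B_1,\dots,B_m>0$, and let $x^*=\{x_i^{*t}\}$ be the allocation produced by the greedy fractional algorithm. For every horizon $T\ge 1$ and every (possibly fractional) allocation $y=\{y_i^t\}$ (in particular the optimal offline one), $SW_{[1:T]}(x^* )\ge \tfrac12\, SW_{[1:T]}(y)$.
   Context: Online block packing: there are $m$ resources with block capacities $B_1,\dots,B_m>0$. A set $\mathcal{C}$ of transactions is given; each $i\in\mathcal{C}$ has an arrival time $a_i\in\{1,2,\dots\}$, base value $v_i\ge 0$, discount factor $\rho_i\in[0,1]$ and demand vector $w_i=(w_{i1},\dots,w_{im})\in\mathbb{R}_+^m$. Executing $i$ in block $t\ge a_i$ yields value $v_i^t:=v_i(1-\rho_i)^{t-a_i}$. A (fractional) allocation is a family $x=\{x_i^t\}_{i\in\mathcal{C},t\ge1}$ with $x_i^t\in[0,1]$, $x_i^t=0$ whenever $t<a_i$, $\sum_t x_i^t\le 1$ for all $i$, and $\sum_i w_{ij}x_i^t\le B_j$ for all blocks $t$ and resources $j$; it is integral if all $x_i^t\in\{0,1\}$. Its social welfare up to horizon $T$ is $SW_{[1:T]}(x)=\sum_{t=1}^T\sum_i x_i^t v_i^t$. The greedy fractional algorithm: at each time $t=1,2,\dots$ it sets $\{x_i^{*t}\}_i$ to be an optimal solution of the linear program maximizing $\sum_i x_i^{*t} v_i^t$ subject to $0\le x_i^{*t}\le 1-\sum_{\tau<t}x_i^{*\tau}$ for all $i$, $\sum_i w_{ij}x_i^{*t}\le B_j$ for all $j$, and $x_i^{*t}=0$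 for all $i$ with $a_i>t$. *)

theory Defs
  imports Complex_Main
begin

text \<open>Transactions have type 'a; the transaction set is C.  Arrival a, base value v, discount rho, demands w i j, capacities B j.
  Since every allocation vanishes before arrival, sums over transactions at time t are
  taken over the (finite) set of transactions of C that have arrived by time t.\<close>

definition arrived :: "'a set \<Rightarrow> ('a \<Rightarrow> nat) \<Rightarrow> nat \<Rightarrow> 'a set" where
  "arrived C a t = {i \<in> C. a i \<le> t}"

definition val :: "('a \<Rightarrow> nat) \<Rightarrow> ('a \<Rightarrow> real) \<Rightarrow> ('a \<Rightarrow> real) \<Rightarrow> 'a \<Rightarrow> nat \<Rightarrow> real" where
  "val a v rho i t = v i * (1 - rho i) ^ (t - a i)"

definition is_alloc ::
  "nat \<Rightarrow> (nat \<Rightarrow> real) \<Rightarrow> 'a set \<Rightarrow> ('a \<Rightarrow> nat) \<Rightarrow> ('a \<Rightarrow> nat \<Rightarrow> real)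
    \<Rightarrow> ('a \<Rightarrow> nat \<Rightarrow> real) \<Rightarrow> bool" where
  "is_alloc m B C a w x \<longleftrightarrow>
     (\<forall>i\<in>C. \<forall>t\<ge>1. 0 \<le> x i t \<and> x i t \<le> 1) \<and>
     (\<forall>i\<in>C. \<forall>t\<ge>1. t < a i \<longrightarrow> x i t = 0) \<and>
     (\<forall>i\<in>C. \<forall>n. (\<Sum>t=1..n. x i t) \<le> 1) \<and>
     (\<forall>t\<ge>1. \<forall>j<m. (\<Sum>i\<in>arrived C a t. w i j * x i t) \<le> B j)"

definition SW ::
  "'a set \<Rightarrow> ('a \<Rightarrow> nat) \<Rightarrow> ('a \<Rightarrow> real) \<Rightarrow> ('a \<Rightarrow> real) \<Rightarrow> ('a \<Rightarrow> nat \<Rightarrow> real) \<Rightarrow> nat \<Rightarrow> real" where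
  "SW C a v rho x T = (\<Sum>t=1..T. \<Sum>i\<in>arrived C a t. x i t * val a v rho i t)"

definition lp_feasible ::
  "nat \<Rightarrow> (nat \<Rightarrow> real) \<Rightarrow> 'a set \<Rightarrow> ('a \<Rightarrow> nat) \<Rightarrow> ('a \<Rightarrow> nat \<Rightarrow> real)
    \<Rightarrow> ('a \<Rightarrow> nat \<Rightarrow> real) \<Rightarrow> nat \<Rightarrow> ('a \<Rightarrow> real) \<Rightarrow> bool" where
  "lp_feasible m B C a w xs t z \<longleftrightarrow>
     (\<forall>i\<in>C. 0 \<le> z i \<and> z i \<le> 1 - (\<Sum>\<tau>\<in>{1..<t}. xs i \<tau>)) \<and>
     (\<forall>j<m. (\<Sum>i\<in>arrived C a t. w i j * z i) \<le> B j) \<and>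
     (\<forall>i\<in>C. t < a i \<longrightarrow> z i = 0)"

definition is_greedy ::
  "nat \<Rightarrow> (nat \<Rightarrow> real) \<Rightarrow> 'a set \<Rightarrow> ('a \<Rightarrow> nat) \<Rightarrow> ('a \<Rightarrow> real) \<Rightarrow> ('a \<Rightarrow> real)
    \<Rightarrow> ('a \<Rightarrow> nat \<Rightarrow> real) \<Rightarrow> ('a \<Rightarrow> nat \<Rightarrow> real) \<Rightarrow> bool" where
  "is_greedy m B C a v rho w xs \<longleftrightarrow>
     (\<forall>t\<ge>1. lp_feasible m B C a w xs t (\<lambda>i. xs i t) \<and>
        (\<forall>z. lp_feasible m B C a w xs t z \<longrightarrow>
           (\<Sum>i\<in>arrived C a t. z i * val a v rho i t)
             \<le> (\<Sum>i\<in>arrived C a t. xs i t * val a v rho i t)))"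

end

theory Submission
  imports Defs
begin

lemma abel_ineq:
  fixes e g f :: "nat \<Rightarrow> real"
  assumes "\<forall>t\<le>T. (\<Sum>s=1..t. e s) \<le> (\<Sum>s=1..t. g s)"
    and "\<forall>s. 1 \<le> s \<longrightarrow> s \<le> T \<longrightarrow> f s \<ge> 0"
    and "\<forall>s u. 1 \<le> s \<longrightarrow> s \<le> u \<longrightarrow> u \<le> T \<longrightarrow> f u \<le> f s"
  shows "(\<Sum>s=1..T. e s * f s) \<le> (\<Sum>s=1..T. g s * f s)"
  using assms
proof (induction T arbitrary: f)
  case 0
  then show ?case by simp
next
  case (Suc T)
  define f' where "f' s = f s - f (Suc T)" for s
  have IH: "(\<Sum>s=1..T. e s * f' s) \<le> (\<Sum>s=1..T. g s * f' s)"
    using Suc.prems by (intro Suc.IH) (auto simp: f'_def)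
  have fS: "f (Suc T) \<ge> 0" using Suc.prems(2) by auto
  have P: "(\<Sum>s=1..Suc T. e s) \<le> (\<Sum>s=1..Suc T. g s)" using Suc.prems(1) by auto
  have eq: "(\<Sum>s=1..Suc T. h s * f s) = (\<Sum>s=1..T. h s * f' s) + f (Suc T) * (\<Sum>s=1..Suc T. h s)"
    for h :: "nat \<Rightarrow> real"
  proof -
    have "(\<Sum>s=1..Suc T. h s * f s) = (\<Sum>s=1..Suc T. h s * f' s + f (Suc T) * h s)"
      by (intro sum.cong) (auto simp: f'_def algebra_simps)
    also have "\<dots> = (\<Sum>s=1..Suc T. h s * f' s) + f (Suc T) * (\<Sum>s=1..Suc T. h s)"
      by (simp only: sum.distrib sum_distrib_left)
    also have "(\<Sum>s=1..Suc T. h s * f' s) = (\<Sum>s=1..T. h s * f' s)"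
      by (simp add: f'_def)
    finally show ?thesis .
  qed
  show ?case unfolding eq[of e] eq[of g]
    using IH mult_left_mono[OF P fS] by linarith
qed

lemma swap_sw:
  fixes x :: "'a \<Rightarrow> nat \<Rightarrow> real" and F :: "'a \<Rightarrow> nat \<Rightarrow> real"
  assumes fin: "\<forall>t. finite (arrived C a t)"
    and z: "\<forall>i\<in>C. \<forall>t\<ge>1. t < a i \<longrightarrow> x i t = 0"
  shows "(\<Sum>t=1..T. \<Sum>i\<in>arrived C a t. x i t * F i t)
       = (\<Sum>i\<in>arrived C a T. \<Sum>t=1..T. x i t * F i t)"
proof -
  have "(\<Sum>t=1..T. \<Sum>i\<in>arrived C a t. x i t * F i t)
       = (\<Sum>t=1..T. \<Sum>i\<in>arrived C a T. x i t * F i t)"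
  proof (rule sum.cong[OF refl])
    fix t assume t: "t \<in> {1..T}"
    show "(\<Sum>i\<in>arrived C a t. x i t * F i t) = (\<Sum>i\<in>arrived C a T. x i t * F i t)"
    proof (rule sum.mono_neutral_left)
      show "finite (arrived C a T)" using fin by blast
      show "arrived C a t \<subseteq> arrived C a T" using t by (auto simp: arrived_def)
      show "\<forall>i\<in>arrived C a T - arrived C a t. x i t * F i t = 0"
        using t z by (auto simp: arrived_def not_le)
    qed
  qed
  also have "\<dots> = (\<Sum>i\<in>arrived C a T. \<Sum>t=1..T. x i t * F i t)"
    by (rule sum.swap)
  finally show ?thesis .
qed

theorem theorem1:
  fixes m :: nat and B :: "nat \<Rightarrow> real" and C :: "'a set"
    and a :: "'a \<Rightarrow> nat" and v rho :: "'a \<Rightarrow> real" and w :: "'a \<Rightarrow> nat \<Rightarrow> real"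
    and xs y :: "'a \<Rightarrow> nat \<Rightarrow> real" and T :: nat
  assumes B_pos: "\<forall>j<m. B j > 0"
    and arr: "\<forall>i\<in>C. a i \<ge> 1"
    and fin: "\<forall>t. finite (arrived C a t)"
    and v_nn: "\<forall>i\<in>C. v i \<ge> 0"
    and rho_01: "\<forall>i\<in>C. 0 \<le> rho i \<and> rho i \<le> 1"
    and w_nn: "\<forall>i\<in>C. \<forall>j<m. w i j \<ge> 0"
    and greedy: "is_greedy m B C a v rho w xs"
    and y_alloc: "is_alloc m B C a w y"
    and T: "T \<ge> 1"
  shows "SW C a v rho xs T \<ge> SW C a v rho y T / 2"
proof -
  define r where "r i t = 1 - (\<Sum>\<tau>\<in>{1..<t}. xs i \<tau>)" for i t
  define e where "e i t = max 0 (y i t - r i t)" for i t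
  let ?val = "val a v rho"
  have gfeas: "\<And>t. t \<ge> 1 \<Longrightarrow> lp_feasible m B C a w xs t (\<lambda>i. xs i t)"
    using greedy unfolding is_greedy_def by blast
  have xs_nn: "\<And>i t. i \<in> C \<Longrightarrow> t \<ge> 1 \<Longrightarrow> xs i t \<ge> 0"
    using gfeas unfolding lp_feasible_def by blast
  have xs_z: "\<forall>i\<in>C. \<forall>t\<ge>1. t < a i \<longrightarrow> xs i t = 0"
    using gfeas unfolding lp_feasible_def by blast
  have y_nn: "\<And>i t. i \<in> C \<Longrightarrow> t \<ge> 1 \<Longrightarrow> y i t \<ge> 0"
    using y_alloc unfolding is_alloc_def by blast
  have y_z: "\<forall>i\<in>C. \<forall>t\<ge>1. t < a i \<longrightarrow> y i t = 0"
    using y_alloc unfolding is_alloc_def by blast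
  have y_sum: "\<And>i n. i \<in> C \<Longrightarrow> (\<Sum>t=1..n. y i t) \<le> 1"
    using y_alloc unfolding is_alloc_def by blast
  have y_cap: "\<And>t j. t \<ge> 1 \<Longrightarrow> j < m \<Longrightarrow> (\<Sum>i\<in>arrived C a t. w i j * y i t) \<le> B j"
    using y_alloc unfolding is_alloc_def by blast
  have r_nn: "r i t \<ge> 0" if i: "i \<in> C" for i t
  proof (cases "t \<ge> 2")
    case True
    then have "t - 1 \<ge> 1" by simp
    from gfeas[OF this] i have "xs i (t - 1) \<le> 1 - (\<Sum>\<tau>\<in>{1..<t-1}. xs i \<tau>)"
      unfolding lp_feasible_def by blast
    moreover have "{1..<t} = insert (t-1) {1..<t-1}" using True by auto
    ultimately show ?thesis unfolding r_def by simp
  next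
    case False
    then have "{1..<t} = {}" by auto
    then show ?thesis unfolding r_def by simp
  qed
  have val_nn: "?val i t \<ge> 0" if "i \<in> C" for i t
    using v_nn rho_01 that unfolding val_def by simp
  have val_mono: "?val i u \<le> ?val i s" if "i \<in> C" "s \<le> u" for i s u
  proof -
    have "(1 - rho i) ^ (u - a i) \<le> (1 - rho i) ^ (s - a i)"
      by (rule power_decreasing) (use that rho_01 in auto)
    then show ?thesis unfolding val_def using v_nn that by (simp add: mult_left_mono)
  qed
  have e_z: "\<forall>i\<in>C. \<forall>t\<ge>1. t < a i \<longrightarrow> e i t = 0"
    using y_z r_nn unfolding e_def by auto
  have step: "(\<Sum>i\<in>arrived C a t. y i t * ?val i t)
      \<le> (\<Sum>i\<in>arrived C a t. xs i t * ?val i t) + (\<Sum>i\<in>arrived C a t. e i t * ?val i t)"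
    if t: "t \<ge> 1" for t
  proof -
    define z where "z i = min (y i t) (r i t)" for i
    have feas: "lp_feasible m B C a w xs t z"
      unfolding lp_feasible_def
    proof (intro conjI ballI allI impI)
      fix i assume "i \<in> C"
      then show "0 \<le> z i" "z i \<le> 1 - (\<Sum>\<tau>\<in>{1..<t}. xs i \<tau>)"
        using y_nn[OF _ t] r_nn unfolding z_def r_def by auto
    next
      fix i assume "i \<in> C" "t < a i"
      then show "z i = 0" using y_z t r_nn unfolding z_def by auto
    next
      fix j assume j: "j < m"
      have "(\<Sum>i\<in>arrived C a t. w i j * z i) \<le> (\<Sum>i\<in>arrived C a t. w i j * y i t)"
        by (rule sum_mono) (use w_nn j in \<open>auto simp: arrived_def z_def intro!: mult_left_mono\<close>)
      then show "(\<Sum>i\<in>arrived C a t. w i j * z i) \<le> B j" using y_cap[OF t j] by linarith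
    qed
    have opt: "(\<Sum>i\<in>arrived C a t. z i * ?val i t) \<le> (\<Sum>i\<in>arrived C a t. xs i t * ?val i t)"
      using greedy t feas unfolding is_greedy_def by blast
    have "(\<Sum>i\<in>arrived C a t. y i t * ?val i t)
        = (\<Sum>i\<in>arrived C a t. z i * ?val i t + e i t * ?val i t)"
      by (intro sum.cong refl) (auto simp: z_def e_def algebra_simps min_def max_def)
    also have "\<dots> = (\<Sum>i\<in>arrived C a t. z i * ?val i t) + (\<Sum>i\<in>arrived C a t. e i t * ?val i t)"
      by (rule sum.distrib)
    finally show ?thesis using opt by linarith
  qed
  have A: "SW C a v rho y T \<le> SW C a v rho xs T + (\<Sum>t=1..T. \<Sum>i\<in>arrived C a t. e i t * ?val i t)"
    unfolding SW_def sum.distrib[symmetric] by (rule sum_mono) (use step in \<open>auto simp: sum.distrib\<close>)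
  have pref: "(\<Sum>s=1..t. e i s) \<le> (\<Sum>s=1..t. y i s) \<and> (\<Sum>s=1..t. e i s) \<le> (\<Sum>s=1..t. xs i s)"
    if i: "i \<in> C" for i t
  proof (induction t)
    case 0
    then show ?case by simp
  next
    case (Suc t)
    have rS: "r i (Suc t) = 1 - (\<Sum>s=1..t. xs i s)"
      unfolding r_def by (simp add: atLeastLessThanSuc_atLeastAtMost)
    have Y: "(\<Sum>s=1..Suc t. y i s) \<le> 1" using y_sum[OF i] .
    have x0: "xs i (Suc t) \<ge> 0" using xs_nn[OF i] by simp
    have y0: "y i (Suc t) \<ge> 0" using y_nn[OF i] by simp
    show ?case
      using Suc Y x0 y0 rS r_nn[OF i, of "Suc t"] unfolding e_def by (auto simp: max_def)
  qed
  have B: "(\<Sum>t=1..T. e i t * ?val i t) \<le> (\<Sum>t=1..T. xs i t * ?val i t)" if i: "i \<in> C" for i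
    by (rule abel_ineq) (use pref[OF i] val_nn[OF i] val_mono[OF i] in auto)
  have "(\<Sum>t=1..T. \<Sum>i\<in>arrived C a t. e i t * ?val i t)
      = (\<Sum>i\<in>arrived C a T. \<Sum>t=1..T. e i t * ?val i t)"
    by (rule swap_sw[OF fin e_z])
  also have "\<dots> \<le> (\<Sum>i\<in>arrived C a T. \<Sum>t=1..T. xs i t * ?val i t)"
    by (rule sum_mono) (use B in \<open>auto simp: arrived_def\<close>)
  also have "\<dots> = SW C a v rho xs T"
    unfolding SW_def by (rule swap_sw[OF fin xs_z, symmetric])
  finally show ?thesis using A by linarith
qed

end
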